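(* Let $a>b>0$, $c>0$, let $C=\{(x,y,z)\in\mathbb{R}^3:\frac{x^2}{a^2}+\frac{y^2}{b^2}-\frac{z^2}{c^2}=0\}$, and consider the spherical conic $C\cap\mathbb{S}^2$. The orthogonal projection of this conic onto the $yz$-plane (the plane of the principal and minor axes) is contained in a hyperbola, and the lines in which the two cyclic planes of $C$ intersect the $yz$-plane are the asymptotes of this hyperbola.
   Context: A cyclic plane of a quadratic cone (apex at the origin) is a plane through the origin such that every parallel plane not through the origin intersects the cone in a circle (with respect to the standard Euclidean metric of $\mathbb{R}^3$). $\mathbb{S}^2$ is the unit sphere. *)

theory Defs
  imports "HOL-Analysis.Analysis"
begin

definition cone_C :: "real \<Rightarrow> real \<Rightarrow> real \<Rightarrow> (real \<times> real \<times> real) set" where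
  "cone_C a b c = {(x,y,z). x\<^sup>2 / a\<^sup>2 + y\<^sup>2 / b\<^sup>2 - z\<^sup>2 / c\<^sup>2 = 0}"

definition cyclic_plane :: "(real \<times> real \<times> real) set \<Rightarrow> (real \<times> real \<times> real) set \<Rightarrow> bool" where
  "cyclic_plane K P \<longleftrightarrow> (\<exists>n. n \<noteq> 0 \<and> P = {v. n \<bullet> v = 0} \<and>
     (\<forall>d::real. d \<noteq> 0 \<longrightarrow> (\<exists>p r. r > 0 \<and> n \<bullet> p = d \<and>
        K \<inter> {v. n \<bullet> v = d} = {v. n \<bullet> v = d \<and> dist v p = r})))"

definition proj_yz :: "real \<times> real \<times> real \<Rightarrow> real \<times> real" where
  "proj_yz v = (case v of (x,y,z) \<Rightarrow> (y,z))"

definition yz_plane :: "(real \<times> real \<times> real) set" where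
  "yz_plane = {v. fst v = 0}"

text \<open>H is a (nondegenerate) hyperbola in the plane, given by a conic equation
  A y^2 + B y z + C z^2 + D y + E z + F = 0 with B^2 - 4AC > 0 and nonzero determinant of the
  conic matrix; As is the set of its asymptotes: the lines through the centre in the two
  directions annihilated by the quadratic part.\<close>
definition hyperbola_with_asymptotes :: "(real \<times> real) set \<Rightarrow> (real \<times> real) set set \<Rightarrow> bool" where
  "hyperbola_with_asymptotes H As \<longleftrightarrow>
    (\<exists>A B C D E F :: real.
       B\<^sup>2 - 4 * A * C > 0 \<and>
       A * (C * F - E\<^sup>2 / 4) - (B / 2) * (B / 2 * F - E / 2 * D / 2)
         + (D / 2) * (B / 2 * E / 2 - C * D / 2) \<noteq> 0 \<and>
       H = {(y,z). A * y\<^sup>2 + B * y * z + C * z\<^sup>2 + D * y + E * z + F = 0} \<and>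
       (\<exists>y0 z0. 2 * A * y0 + B * z0 + D = 0 \<and> B * y0 + 2 * C * z0 + E = 0 \<and>
          As = {{(y0 + t * u, z0 + t * w) | t. True} | u w.
                  (u, w) \<noteq> (0, 0) \<and> A * u\<^sup>2 + B * u * w + C * w\<^sup>2 = 0}))"

end

theory Submission imports Defs begin

lemma ident0:
  fixes q1 q2 q3 al be s d x y z N py pz rr e :: real
  assumes "al^2 = q2 - q1" "be^2 = q1 - q3" "s^2 = 1" "N = q2 - q3"
    "q1*N*py = al*d*q3" "q1*N*pz = s*be*d*q2" "q1^2*N*rr = -(d^2*q2*q3)" "N*e = d*(q2+q3)"
  shows "q1^2*N^2*((q1*x^2 + q2*y^2 + q3*z^2) - (
     q1*(x^2 + (y - py)^2 + (z - pz)^2 - rr)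
     + (al*y + s*be*z - d)*(al*y - s*be*z + e))) = 0"
  using assms by algebra

lemma ident1:
  fixes q1 q2 q3 al be s d N py pz :: real
  assumes "al^2 = q2 - q1" "be^2 = q1 - q3" "s^2 = 1" "N = q2 - q3"
    "q1*N*py = al*d*q3" "q1*N*pz = s*be*d*q2"
  shows "q1*N*(al*py + s*be*pz - d) = 0"
  using assms by algebra

lemma cyc_exist:
  fixes K :: "(real \<times> real \<times> real) set" and q1 q2 q3 al be s :: real
  assumes HK: "\<And>x y z. ((x,y,z) \<in> K) = (q1*x^2+q2*y^2+q3*z^2 = 0)"
    and q: "q3 < 0" "0 < q1" "q1 < q2"
    and ab: "al > 0" "be > 0" "al^2 = q2 - q1" "be^2 = q1 - q3" "s^2 = 1"
  shows "cyclic_plane K {v. (0,al,s*be) \<bullet> v = 0}"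
  unfolding cyclic_plane_def
proof (intro exI conjI allI impI)
  show "(0::real,al,s*be) \<noteq> 0" using ab by (simp add: zero_prod_def)
  show "{v. (0, al, s * be) \<bullet> v = 0} = {v. (0, al, s * be) \<bullet> v = 0}" by simp
  fix d :: real assume d: "d \<noteq> 0"
  define N where "N = q2 - q3"
  have N: "N > 0" using q by (simp add: N_def)
  define py where "py = al*d*q3/(q1*N)"
  define pz where "pz = s*be*d*q2/(q1*N)"
  define rr where "rr = -(d^2*q2*q3)/(q1^2*N)"
  define e where "e = d*(q2+q3)/N"
  have hpy: "q1*N*py = al*d*q3" using q N by (simp add: py_def)
  have hpz: "q1*N*pz = s*be*d*q2" using q N by (simp add: pz_def)
  have hrr: "q1^2*N*rr = -(d^2*q2*q3)" using q N by (simp add: rr_def)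
  have he: "N*e = d*(q2+q3)" using N by (simp add: e_def)
  have rrpos: "rr > 0"
  proof -
    have "d^2 > 0" using d by simp
    moreover have "q2*q3 < 0" using q by (simp add: mult_pos_neg)
    ultimately have "-(d^2*q2*q3) > 0" by (simp add: mult_pos_neg mult.assoc)
    moreover have "q1^2*N > 0" using q N by simp
    ultimately show ?thesis unfolding rr_def by (rule divide_pos_pos)
  qed
  let ?p = "(0::real, py, pz)"
  show "sqrt rr > 0" using rrpos by simp
  have "q1*N*(al*py + s*be*pz - d) = 0" using ident1[OF ab(3,4,5) N_def hpy hpz] .
  hence "al*py + s*be*pz - d = 0" using q N by simp
  thus "(0, al, s * be) \<bullet> ?p = d" by (simp add: inner_Pair)
  show "K \<inter> {v. (0, al, s * be) \<bullet> v = d} =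
        {v. (0, al, s * be) \<bullet> v = d \<and> dist v ?p = sqrt rr}"
  proof (intro set_eqI)
    fix v :: "real \<times> real \<times> real"
    obtain x y z where v: "v = (x,y,z)" by (cases v) auto
    have inn: "(0, al, s * be) \<bullet> v = al*y + s*be*z" by (simp add: v inner_Pair)
    have dist2: "(dist v ?p)^2 = x^2 + (y - py)^2 + (z - pz)^2"
      unfolding dist_norm power2_norm_eq_inner by (simp add: v inner_Pair power2_eq_square algebra_simps)
    have "q1^2*N^2*((q1*x^2 + q2*y^2 + q3*z^2) - (
     q1*(x^2 + (y - py)^2 + (z - pz)^2 - rr)
     + (al*y + s*be*z - d)*(al*y - s*be*z + e))) = 0"
      using ident0[OF ab(3,4,5) N_def hpy hpz hrr he] .
    hence id: "q1*x^2 + q2*y^2 + q3*z^2 = q1*(x^2 + (y - py)^2 + (z - pz)^2 - rr)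
     + (al*y + s*be*z - d)*(al*y - s*be*z + e)" using q N by simp
    have dd: "(dist v ?p = sqrt rr) = ((dist v ?p)^2 = rr)"
      using rrpos by (auto simp: real_sqrt_unique)
    have "(v \<in> K) = (q1*x^2 + q2*y^2 + q3*z^2 = 0)" by (simp add: v HK)
    show "v \<in> K \<inter> {v. (0, al, s * be) \<bullet> v = d} \<longleftrightarrow>
          v \<in> {v. (0, al, s * be) \<bullet> v = d \<and> dist v ?p = sqrt rr}"
    proof (cases "al*y + s*be*z = d")
      case True
      then have "q1*x^2 + q2*y^2 + q3*z^2 = q1*(x^2 + (y - py)^2 + (z - pz)^2 - rr)" using id by simp
      then have "(q1*x^2 + q2*y^2 + q3*z^2 = 0) = (x^2 + (y - py)^2 + (z - pz)^2 = rr)" using q by simp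
      then show ?thesis using True dd dist2 inn \<open>(v \<in> K) = _\<close> by simp
    next
      case False
      then show ?thesis using inn by simp
    qed
  qed
qed
lemma key:
  fixes q1 q2 q3 k n1 n2 n3 :: real
  assumes q: "q3 < q1" "q1 < q2" and n: "n1 \<noteq> 0 \<or> n2 \<noteq> 0 \<or> n3 \<noteq> 0"
    and H: "\<And>x y z. n1*x+n2*y+n3*z = 0 \<Longrightarrow> q1*x^2+q2*y^2+q3*z^2 = k*(x^2+y^2+z^2)"
  shows "n1 = 0 \<and> k = q1 \<and> (q2-q1)*n3^2 = (q1-q3)*n2^2"
proof -
  have h1: "q1*n2^2+q2*n1^2 = k*(n2^2+n1^2)" using H[of n2 "-n1" 0] by (simp add: algebra_simps)
  have h2: "q1*n3^2+q3*n1^2 = k*(n3^2+n1^2)" using H[of n3 0 "-n1"] by (simp add: algebra_simps)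
  have h3: "q2*n3^2+q3*n2^2 = k*(n3^2+n2^2)" using H[of 0 n3 "-n2"] by (simp add: algebra_simps)
  have h12: "q1*(n2+n3)^2+q2*n1^2+q3*n1^2 = k*((n2+n3)^2+n1^2+n1^2)"
    using H[of "n2+n3" "-n1" "-n1"] by (simp add: algebra_simps)
  have h13: "q1*n2^2+q2*(n3-n1)^2+q3*n2^2 = k*(n2^2+(n3-n1)^2+n2^2)"
    using H[of n2 "n3-n1" "-n2"] by (simp add: algebra_simps)
  have h23: "q1*n3^2+q2*n3^2+q3*(n1+n2)^2 = k*(n3^2+n3^2+(n1+n2)^2)"
    using H[of n3 n3 "-(n1+n2)"] by (simp add: power2_eq_square algebra_simps)
  have E1: "(q1-k)*n2^2 + (q2-k)*n1^2 = 0" using h1 by (simp add: algebra_simps)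
  have E2: "(q1-k)*n3^2 + (q3-k)*n1^2 = 0" using h2 by (simp add: algebra_simps)
  have E3: "(q2-k)*n3^2 + (q3-k)*n2^2 = 0" using h3 by (simp add: algebra_simps)
  have B12: "(q1-k)*n2*n3 = 0"
  proof -
    have "(q1*(n2+n3)^2+q2*n1^2+q3*n1^2 - k*((n2+n3)^2+n1^2+n1^2)) - (q1*n2^2+q2*n1^2 - k*(n2^2+n1^2))
      - (q1*n3^2+q3*n1^2 - k*(n3^2+n1^2)) = 2*((q1-k)*n2*n3)" by (simp add: power2_eq_square algebra_simps)
    thus ?thesis using h12 h1 h2 by simp
  qed
  have B13: "(q2-k)*n1*n3 = 0"
  proof -
    have "(q1*n2^2+q2*(n3-n1)^2+q3*n2^2 - k*(n2^2+(n3-n1)^2+n2^2)) - (q1*n2^2+q2*n1^2 - k*(n2^2+n1^2))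
      - (q2*n3^2+q3*n2^2 - k*(n3^2+n2^2)) = -2*((q2-k)*n1*n3)" by (simp add: power2_eq_square algebra_simps)
    thus ?thesis using h13 h1 h3 by simp
  qed
  have B23: "(q3-k)*n1*n2 = 0"
  proof -
    have "(q1*n3^2+q2*n3^2+q3*(n1+n2)^2 - k*(n3^2+n3^2+(n1+n2)^2)) - (q1*n3^2+q3*n1^2 - k*(n3^2+n1^2))
      - (q2*n3^2+q3*n2^2 - k*(n3^2+n2^2)) = 2*((q3-k)*n1*n2)" by (simp add: power2_eq_square algebra_simps)
    thus ?thesis using h23 h2 h3 by simp
  qed
  have n10: "n1 = 0"
  proof (rule ccontr)
    assume n1: "n1 \<noteq> 0"
    have p1: "n1^2 > 0" using n1 by simp
    have "k = q2 \<or> n3 = 0" using B13 n1 by auto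
    moreover have "k = q3 \<or> n2 = 0" using B23 n1 by auto
    ultimately show False
    proof (elim disjE)
      assume "k = q2" "k = q3" thus False using q by simp
    next
      assume "k = q2" "n2 = 0"
      with E2 have "(q1-q2)*n3^2 + (q3-q2)*n1^2 = 0" by simp
      moreover have "(q1-q2)*n3^2 \<le> 0" using q by (simp add: mult_nonpos_nonneg)
      moreover have "(q3-q2)*n1^2 < 0" using q p1 by (simp add: mult_neg_pos)
      ultimately show False by linarith
    next
      assume "n3 = 0" "k = q3"
      with E1 have "(q1-q3)*n2^2 + (q2-q3)*n1^2 = 0" by simp
      moreover have "(q1-q3)*n2^2 \<ge> 0" using q by simp
      moreover have "(q2-q3)*n1^2 > 0" using q p1 by simp
      ultimately show False by linarith
    next
      assume "n3 = 0" "n2 = 0"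
      with E2 have "(q3-k)*n1^2 = 0" by simp
      hence "k = q3" using p1 by simp
      with E1 \<open>n2 = 0\<close> have "(q2-q3)*n1^2 = 0" by simp
      thus False using q p1 by simp
    qed
  qed
  have kq: "k = q1"
  proof -
    have "(q1-k)*n2^2 = 0" "(q1-k)*n3^2 = 0" using E1 E2 n10 by simp_all
    thus ?thesis using n n10 by auto
  qed
  show ?thesis using n10 kq E3 by (simp add: algebra_simps)
qed

lemma cyc_only:
  fixes K :: "(real \<times> real \<times> real) set" and q1 q2 q3 al be :: real
  assumes HK: "\<And>x y z. ((x,y,z) \<in> K) = (q1*x^2+q2*y^2+q3*z^2 = 0)"
    and q: "q3 < 0" "0 < q1" "q1 < q2"
    and ab: "al > 0" "be > 0" "al^2 = q2 - q1" "be^2 = q1 - q3"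
    and cyc: "cyclic_plane K P"
  shows "P = {v. (0,al,be) \<bullet> v = 0} \<or> P = {v. (0,al,-be) \<bullet> v = 0}"
proof -
  obtain n where n0: "n \<noteq> 0" and P: "P = {v. n \<bullet> v = 0}" and
    C: "\<And>d::real. d \<noteq> 0 \<Longrightarrow> (\<exists>p r. r > 0 \<and> n \<bullet> p = d \<and>
        K \<inter> {v. n \<bullet> v = d} = {v. n \<bullet> v = d \<and> dist v p = r})"
    using cyc unfolding cyclic_plane_def by blast
  obtain p r where r: "r > 0" and np: "n \<bullet> p = 1" and
    KC: "K \<inter> {v. n \<bullet> v = 1} = {v. n \<bullet> v = 1 \<and> dist v p = r}" using C[of 1] by auto
  obtain n1 n2 n3 where nn: "n = (n1,n2,n3)" by (cases n) auto
  obtain p1 p2 p3 where pp: "p = (p1,p2,p3)" by (cases p) auto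
  define Qp where "Qp = q1*p1^2+q2*p2^2+q3*p3^2"
  define k where "k = - Qp / r^2"
  have H: "q1*x^2+q2*y^2+q3*z^2 = k*(x^2+y^2+z^2)" if hx: "n1*x+n2*y+n3*z = 0" for x y z
  proof (cases "(x,y,z) = (0::real,0::real,0::real)")
    case True thus ?thesis by simp
  next
    case False
    define u where "u = (x,y,z)"
    have nu: "norm u > 0" using False by (simp add: u_def zero_prod_def)
    define t where "t = r / norm u"
    have t2: "t^2 * (x^2+y^2+z^2) = r^2"
    proof -
      have "(norm u)^2 = x^2+y^2+z^2" unfolding power2_norm_eq_inner
        by (simp add: u_def inner_Pair power2_eq_square)
      moreover have "t^2 * (norm u)^2 = r^2" using nu by (simp add: t_def power_divide)
      ultimately show ?thesis by simp
    qed
    have inK: "(p1+t*x, p2+t*y, p3+t*z) \<in> K \<and> (p1-t*x, p2-t*y, p3-t*z) \<in> K"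
    proof -
      have a: "p + t *\<^sub>R u \<in> {v. n \<bullet> v = 1 \<and> dist v p = r}"
      proof -
        have "n \<bullet> u = 0" using hx by (simp add: nn u_def inner_Pair)
        moreover have "dist (p + t *\<^sub>R u) p = r" using nu r by (simp add: dist_norm t_def)
        ultimately show ?thesis using np by (simp add: inner_add_right)
      qed
      have b: "p - t *\<^sub>R u \<in> {v. n \<bullet> v = 1 \<and> dist v p = r}"
      proof -
        have "n \<bullet> u = 0" using hx by (simp add: nn u_def inner_Pair)
        moreover have "dist (p - t *\<^sub>R u) p = r" using nu r by (simp add: dist_norm t_def)
        ultimately show ?thesis using np by (simp add: inner_diff_right)
      qed
      from a b show ?thesis unfolding KC[symmetric] by (simp add: pp u_def)
    qed
    hence e1: "q1*(p1+t*x)^2+q2*(p2+t*y)^2+q3*(p3+t*z)^2 = 0"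
      and e2: "q1*(p1-t*x)^2+q2*(p2-t*y)^2+q3*(p3-t*z)^2 = 0" using HK by auto
    have sum2: "(q1*(p1+t*x)^2+q2*(p2+t*y)^2+q3*(p3+t*z)^2) + (q1*(p1-t*x)^2+q2*(p2-t*y)^2+q3*(p3-t*z)^2)
      = 2*(Qp + t^2*(q1*x^2+q2*y^2+q3*z^2))" unfolding Qp_def by (simp add: power2_eq_square algebra_simps)
    have eq: "t^2*(q1*x^2+q2*y^2+q3*z^2) = - Qp" using sum2 e1 e2 by simp
    have "r^2 * (q1*x^2+q2*y^2+q3*z^2) = (t^2*(x^2+y^2+z^2)) * (q1*x^2+q2*y^2+q3*z^2)" using t2 by simp
    also have "\<dots> = (x^2+y^2+z^2) * (t^2*(q1*x^2+q2*y^2+q3*z^2))" by (simp only: mult_ac)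
    also have "\<dots> = - Qp * (x^2+y^2+z^2)" using eq by simp
    finally have "r^2 * (q1*x^2+q2*y^2+q3*z^2) = - Qp * (x^2+y^2+z^2)" .
    thus ?thesis using r unfolding k_def by (simp add: field_simps)
  qed
  have nz: "n1 \<noteq> 0 \<or> n2 \<noteq> 0 \<or> n3 \<noteq> 0" using n0 by (simp add: nn zero_prod_def)
  have q': "q3 < q1" "q1 < q2" using q by auto
  from key[OF q' nz H] have n10: "n1 = 0" and rel: "(q2-q1)*n3^2 = (q1-q3)*n2^2" by auto
  have "(al*n3)^2 = (be*n2)^2" using rel ab by (simp add: power_mult_distrib)
  hence cs: "al*n3 = be*n2 \<or> al*n3 = -(be*n2)" by (simp add: power2_eq_iff)
  have n2: "n2 \<noteq> 0"
  proof
    assume "n2 = 0"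
    with cs have "al*n3 = 0" by auto
    with ab have "n3 = 0" by simp
    with nz n10 \<open>n2 = 0\<close> show False by simp
  qed
  have Pe: "P = {v. n2 * fst (snd v) + n3 * snd (snd v) = 0}"
    unfolding P by (auto simp: nn n10 inner_Pair)
  from cs show ?thesis
  proof
    assume h: "al*n3 = be*n2"
    have "\<And>y z. (n2*y + n3*z = 0) = (al*y + be*z = 0)"
    proof -
      fix y z
      have "al*(n2*y + n3*z) = n2*(al*y + be*z)" using h by (simp add: algebra_simps)
      thus "(n2*y + n3*z = 0) = (al*y + be*z = 0)" using n2 ab by (metis mult_eq_0_iff less_irrefl)
    qed
    hence "P = {v. (0,al,be) \<bullet> v = 0}" unfolding Pe by (auto simp: inner_Pair)
    thus ?thesis by simp
  next
    assume h: "al*n3 = -(be*n2)"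
    have "\<And>y z. (n2*y + n3*z = 0) = (al*y + -be*z = 0)"
    proof -
      fix y z
      have "al*(n2*y + n3*z) = n2*(al*y) + (al*n3)*z" by (simp add: algebra_simps)
      also have "\<dots> = n2*(al*y) + (-(be*n2))*z" using h by simp
      also have "\<dots> = n2*(al*y + -be*z)" by (simp add: algebra_simps)
      finally have "al*(n2*y + n3*z) = n2*(al*y + -be*z)" .
      thus "(n2*y + n3*z = 0) = (al*y + -be*z = 0)" using n2 ab by (metis mult_eq_0_iff less_irrefl)
    qed
    hence "P = {v. (0,al,-be) \<bullet> v = 0}" unfolding Pe by (auto simp: inner_Pair)
    thus ?thesis by simp
  qed
qed
lemma line_eq:
  fixes al be s u w :: real
  assumes ab: "al > 0" "be > 0" and s: "s^2 = 1" and uw: "(u,w) \<noteq> (0,0)" and h: "al*u + s*be*w = 0"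
  shows "{(0 + t*u, 0 + t*w) | t. True} = {(y,z). al*y + s*be*z = 0}"
proof -
  have s0: "s \<noteq> 0" using s by auto
  have u0: "u \<noteq> 0"
  proof
    assume "u = 0" with h ab s0 have "w = 0" by simp
    with uw \<open>u = 0\<close> show False by simp
  qed
  show ?thesis
  proof (intro set_eqI iffI)
    fix v assume "v \<in> {(0 + t*u, 0 + t*w) | t. True}"
    then obtain t where "v = (t*u, t*w)" by auto
    moreover have "al*(t*u) + s*be*(t*w) = t*(al*u + s*be*w)" by (simp add: algebra_simps)
    ultimately show "v \<in> {(y,z). al*y + s*be*z = 0}" using h by simp
  next
    fix v assume "v \<in> {(y,z). al*y + s*be*z = 0}"
    then obtain y z where v: "v = (y,z)" and e: "al*y + s*be*z = 0" by auto
    define t where "t = y/u"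
    have "y = t*u" using u0 by (simp add: t_def)
    moreover have "z = t*w"
    proof -
      have "s*be*(z - t*w) = (al*y + s*be*z) - t*(al*u + s*be*w)" using \<open>y = t*u\<close> by (simp add: algebra_simps)
      hence "s*be*(z - t*w) = 0" using e h by simp
      thus ?thesis using s0 ab by simp
    qed
    ultimately show "v \<in> {(0 + t*u, 0 + t*w) | t. True}" using v by auto
  qed
qed

lemma proj_line:
  fixes al be s :: real
  shows "proj_yz ` ({v. (0,al,s*be) \<bullet> v = 0} \<inter> yz_plane) = {(y,z). al*y + s*be*z = 0}"
proof (intro set_eqI iffI)
  fix w assume "w \<in> proj_yz ` ({v. (0,al,s*be) \<bullet> v = 0} \<inter> yz_plane)"
  then obtain x y z where "w = (y,z)" "(0,al,s*be) \<bullet> (x,y,z) = 0" by (auto simp: proj_yz_def)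
  thus "w \<in> {(y,z). al*y + s*be*z = 0}" by (simp add: inner_Pair)
next
  fix w assume "w \<in> {(y,z). al*y + s*be*z = 0}"
  then obtain y z where w: "w = (y,z)" and e: "al*y + s*be*z = 0" by auto
  have "(0,y,z) \<in> {v. (0,al,s*be) \<bullet> v = 0} \<inter> yz_plane" using e by (simp add: inner_Pair yz_plane_def)
  moreover have "proj_yz (0,y,z) = w" by (simp add: proj_yz_def w)
  ultimately show "w \<in> proj_yz ` ({v. (0,al,s*be) \<bullet> v = 0} \<inter> yz_plane)" by force
qed

theorem mainTheorem8:
  fixes a b c :: real
  assumes "a > b" and "b > 0" and "c > 0"
  shows "\<exists>P1 P2. P1 \<noteq> P2 \<and> {P. cyclic_plane (cone_C a b c) P} = {P1, P2} \<and>
           (\<exists>H. proj_yz ` (cone_C a b c \<inter> sphere 0 1) \<subseteq> H \<and>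
                hyperbola_with_asymptotes H
                  {proj_yz ` (P1 \<inter> yz_plane), proj_yz ` (P2 \<inter> yz_plane)})"
proof -
  define q1 where "q1 = 1/a^2"
  define q2 where "q2 = 1/b^2"
  define q3 where "q3 = -(1/c^2)"
  have q: "q3 < 0" "0 < q1" "q1 < q2"
    using assms by (simp_all add: q1_def q2_def q3_def divide_simps power_strict_mono)
  have HK: "\<And>x y z. ((x,y,z) \<in> cone_C a b c) = (q1*x^2+q2*y^2+q3*z^2 = 0)"
    by (simp add: cone_C_def q1_def q2_def q3_def)
  define al where "al = sqrt (q2 - q1)"
  define be where "be = sqrt (q1 - q3)"
  have ab: "al > 0" "be > 0" "al^2 = q2 - q1" "be^2 = q1 - q3" using q by (auto simp: al_def be_def)
  define P1 where "P1 = {v. (0::real,al,1*be) \<bullet> v = 0}"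
  define P2 where "P2 = {v. (0::real,al,(-1)*be) \<bullet> v = 0}"
  have c1: "cyclic_plane (cone_C a b c) P1" unfolding P1_def
    by (rule cyc_exist[OF HK q ab]) simp
  have c2: "cyclic_plane (cone_C a b c) P2" unfolding P2_def
    by (rule cyc_exist[OF HK q ab]) simp
  have ne: "P1 \<noteq> P2"
  proof
    assume "P1 = P2"
    moreover have "(0,be,-al) \<in> P1" by (simp add: P1_def inner_Pair algebra_simps)
    moreover have "(0,be,-al) \<notin> P2" using ab by (simp add: P2_def inner_Pair)
    ultimately show False by simp
  qed
  have cset: "{P. cyclic_plane (cone_C a b c) P} = {P1, P2}"
  proof (intro set_eqI iffI)
    fix P assume "P \<in> {P. cyclic_plane (cone_C a b c) P}"
    hence "cyclic_plane (cone_C a b c) P" by simp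
    from cyc_only[OF HK q ab this] show "P \<in> {P1, P2}" by (simp add: P1_def P2_def)
  next
    fix P assume "P \<in> {P1, P2}" thus "P \<in> {P. cyclic_plane (cone_C a b c) P}" using c1 c2 by auto
  qed
  define H where "H = {(y,z). al^2 * y\<^sup>2 + 0 * y * z + (-(be^2)) * z\<^sup>2 + 0 * y + 0 * z + q1 = (0::real)}"
  have sub: "proj_yz ` (cone_C a b c \<inter> sphere 0 1) \<subseteq> H"
  proof
    fix w assume "w \<in> proj_yz ` (cone_C a b c \<inter> sphere 0 1)"
    then obtain x y z where w: "w = (y,z)" and K: "(x,y,z) \<in> cone_C a b c" and S: "(x,y,z) \<in> sphere 0 1"
      by (auto simp: proj_yz_def)
    have "norm (x,y,z) = 1" using S by simp
    hence "(x,y,z) \<bullet> (x,y,z) = 1" by (metis power2_norm_eq_inner power_one)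
    hence sp: "x^2 + y^2 + z^2 = 1" by (simp add: inner_Pair power2_eq_square)
    have "q1*x^2+q2*y^2+q3*z^2 = 0" using K HK by simp
    moreover have "x^2 = 1 - y^2 - z^2" using sp by simp
    ultimately have e: "q1*(1 - y^2 - z^2) + q2*y^2 + q3*z^2 = 0" by simp
    have "(q2-q1)*y^2 + (-(q1-q3))*z^2 + q1 = q1*(1 - y^2 - z^2) + q2*y^2 + q3*z^2"
      by (simp add: algebra_simps)
    hence "al^2 * y\<^sup>2 + (-(be^2)) * z\<^sup>2 + q1 = 0" using e unfolding ab(3,4) by simp
    thus "w \<in> H" by (simp add: H_def w)
  qed
  have L1: "proj_yz ` (P1 \<inter> yz_plane) = {(y,z). al*y + 1*be*z = 0}" unfolding P1_def by (rule proj_line)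
  have L2: "proj_yz ` (P2 \<inter> yz_plane) = {(y,z). al*y + (-1)*be*z = 0}" unfolding P2_def by (rule proj_line)
  have As: "{{(0 + t * u, 0 + t * w) | t. True} | u w.
                  (u, w) \<noteq> (0, 0) \<and> al^2 * u\<^sup>2 + 0 * u * w + (-(be^2)) * w\<^sup>2 = 0}
        = {proj_yz ` (P1 \<inter> yz_plane), proj_yz ` (P2 \<inter> yz_plane)}" (is "?A = _")
  proof (intro set_eqI iffI)
    fix X assume "X \<in> ?A"
    then obtain u w where X: "X = {(0 + t * u, 0 + t * w) | t. True}" and uw: "(u,w) \<noteq> (0,0)"
      and e: "al^2 * u\<^sup>2 + 0 * u * w + (-(be^2)) * w\<^sup>2 = 0" by blast
    have "(al*u)^2 = (be*w)^2" using e by (simp add: power_mult_distrib)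
    hence "al*u = be*w \<or> al*u = -(be*w)" by (simp add: power2_eq_iff)
    thus "X \<in> {proj_yz ` (P1 \<inter> yz_plane), proj_yz ` (P2 \<inter> yz_plane)}"
    proof
      assume "al*u = be*w"
      hence "al*u + (-1)*be*w = 0" by simp
      from line_eq[OF ab(1,2) _ uw this] show ?thesis unfolding X L2 by simp
    next
      assume "al*u = -(be*w)"
      hence "al*u + 1*be*w = 0" by simp
      from line_eq[OF ab(1,2) _ uw this] show ?thesis unfolding X L1 by simp
    qed
  next
    fix X assume X: "X \<in> {proj_yz ` (P1 \<inter> yz_plane), proj_yz ` (P2 \<inter> yz_plane)}"
    have uw: "(be, -al) \<noteq> (0,0)" "(be, al) \<noteq> (0,0)" using ab by auto
    have e1: "al^2 * be\<^sup>2 + 0 * be * (-al) + (-(be^2)) * (-al)\<^sup>2 = 0" by (simp add: algebra_simps)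
    have e2: "al^2 * be\<^sup>2 + 0 * be * al + (-(be^2)) * al\<^sup>2 = 0" by (simp add: algebra_simps)
    have l1: "{(0 + t*be, 0 + t*(-al)) | t. True} = {(y,z). al*y + 1*be*z = 0}"
      by (rule line_eq[OF ab(1,2) _ uw(1)]) (simp_all add: algebra_simps)
    have l2: "{(0 + t*be, 0 + t*al) | t. True} = {(y,z). al*y + (-1)*be*z = 0}"
      by (rule line_eq[OF ab(1,2) _ uw(2)]) (simp_all add: algebra_simps)
    from X show "X \<in> ?A"
    proof
      assume "X = proj_yz ` (P1 \<inter> yz_plane)"
      hence "X = {(0 + t*be, 0 + t*(-al)) | t. True}" using L1 l1 by simp
      thus ?thesis using uw(1) e1 by blast
    next
      assume "X \<in> {proj_yz ` (P2 \<inter> yz_plane)}"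
      hence "X = {(0 + t*be, 0 + t*al) | t. True}" using L2 l2 by simp
      thus ?thesis using uw(2) e2 by blast
    qed
  qed
  have hyp: "hyperbola_with_asymptotes H {proj_yz ` (P1 \<inter> yz_plane), proj_yz ` (P2 \<inter> yz_plane)}"
    unfolding hyperbola_with_asymptotes_def
  apply (rule exI[of _ "al^2"], rule exI[of _ 0], rule exI[of _ "-(be^2)"], rule exI[of _ 0],
    rule exI[of _ 0], rule exI[of _ q1])
  proof (intro conjI exI[of _ 0])
    show "0\<^sup>2 - 4 * al^2 * (-(be^2)) > (0::real)" using ab(1,2) by simp
    show "al^2 * ((-(be^2)) * q1 - 0\<^sup>2 / 4) - (0 / 2) * (0 / 2 * q1 - 0 / 2 * 0 / 2)
         + (0 / 2) * (0 / 2 * 0 / 2 - (-(be^2)) * 0 / 2) \<noteq> (0::real)" using ab q by simp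
    show "H = {(y,z). al^2 * y\<^sup>2 + 0 * y * z + (-(be^2)) * z\<^sup>2 + 0 * y + 0 * z + q1 = 0}" by (simp add: H_def)
    show "2 * al^2 * 0 + 0 * 0 + 0 = (0::real)" by simp
    show "0 * 0 + 2 * (-(be^2)) * 0 + 0 = (0::real)" by simp
    show "{proj_yz ` (P1 \<inter> yz_plane), proj_yz ` (P2 \<inter> yz_plane)} =
      {{(0 + t * u, 0 + t * w) | t. True} | u w.
                  (u, w) \<noteq> (0, 0) \<and> al^2 * u\<^sup>2 + 0 * u * w + (-(be^2)) * w\<^sup>2 = 0}" by (rule As[symmetric])
  qed
  show ?thesis
    apply (rule exI[of _ P1], rule exI[of _ P2], rule conjI[OF ne], rule conjI[OF cset])
    apply (rule exI[of _ H], rule conjI[OF sub hyp])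
    done
qed

end
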